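(* Consider the Cannings model described in the context and suppose $\lim_{N\to\infty}c_N=0$. Then for all $\varepsilon>0$, $$\lim_{N\to\infty}\frac{N^2}{c_N}\,\mathbb{P}\Big(\Big|\frac{\nu_{k,N}}{N}-\frac{X_{k,N}}{S_N}\Big|>\varepsilon\text{ for some }k\in[N]\Big)=0.$$
   Context: Cannings model with i.i.d. offspring numbers and sampling: for each $N$, let $X_{1,N},\dots,X_{N,N}$ be i.i.d. random variables with values in $\{1,2,\dots\}$, and $S_N=X_{1,N}+\cdots+X_{N,N}$. Conditionally on these, $N$ of the $S_N$ offspring are sampled uniformly without replacement to form the next generation, and $\nu_{k,N}$ is the number of sampled offspring of the $k$th individual. $(x)_k$ is the falling factorial and $c_N=E[(\nu_{1,N})_2]/(N-1)$. *)

theory Defs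
  imports "HOL-Probability.Probability"
begin

text \<open>Offspring of the current generation (individuals indexed 0..N-1), labelled by
  pairs (k, j): the j-th child of individual k, for j < x k.\<close>
definition offspring :: "nat \<Rightarrow> (nat \<Rightarrow> nat) \<Rightarrow> (nat \<times> nat) set" where
  "offspring N x = {(k, j). k < N \<and> j < x k}"

text \<open>Joint law of (X_{.,N}, nu_{.,N}) for the Cannings model with i.i.d. offspring
  numbers of law q: X_0,...,X_{N-1} i.i.d. with law q; then N of the S_N offspring are
  sampled uniformly without replacement, and nu_k counts sampled children of individual k.\<close>
definition cannings :: "nat pmf \<Rightarrow> nat \<Rightarrow> ((nat \<Rightarrow> nat) \<times> (nat \<Rightarrow> nat)) pmf" where
  "cannings q N =
     bind_pmf (Pi_pmf {..<N} 0 (\<lambda>_. q))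
       (\<lambda>x. map_pmf (\<lambda>T. (x, \<lambda>k. card {j. (k, j) \<in> T}))
              (pmf_of_set {T. T \<subseteq> offspring N x \<and> card T = N}))"

definition coal_prob :: "nat pmf \<Rightarrow> nat \<Rightarrow> real" where
  "coal_prob q N =
     measure_pmf.expectation (cannings q N)
        (\<lambda>(x, v). real (v 0) * (real (v 0) - 1)) / (real N - 1)"

end

theory Submission imports Defs begin



lemma card_supsets:
  assumes U: "finite U" and A: "A \<subseteq> U" "card A \<le> N"
  shows "card {T. T \<subseteq> U \<and> card T = N \<and> A \<subseteq> T} = (card U - card A) choose (N - card A)"
proof -
  have fA: "finite A" using A U finite_subset by blast
  have "bij_betw (\<lambda>T. T - A) {T. T \<subseteq> U \<and> card T = N \<and> A \<subseteq> T} {R. R \<subseteq> U - A \<and> card R = N - card A}"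
  proof (rule bij_betw_byWitness[where f'="\<lambda>R. R \<union> A"])
    show "\<forall>a\<in>{T. T \<subseteq> U \<and> card T = N \<and> A \<subseteq> T}. a - A \<union> A = a" by auto
    show "\<forall>a'\<in>{R. R \<subseteq> U - A \<and> card R = N - card A}. a' \<union> A - A = a'" by auto
    show "(\<lambda>T. T - A) ` {T. T \<subseteq> U \<and> card T = N \<and> A \<subseteq> T} \<subseteq> {R. R \<subseteq> U - A \<and> card R = N - card A}"
      using fA by (auto simp: card_Diff_subset)
    show "(\<lambda>R. R \<union> A) ` {R. R \<subseteq> U - A \<and> card R = N - card A} \<subseteq> {T. T \<subseteq> U \<and> card T = N \<and> A \<subseteq> T}"
    proof
      fix T assume "T \<in> (\<lambda>R. R \<union> A) ` {R. R \<subseteq> U - A \<and> card R = N - card A}"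
      then obtain R where R: "R \<subseteq> U - A" "card R = N - card A" and T: "T = R \<union> A" by auto
      have "finite R" using R U finite_subset by blast
      moreover have "R \<inter> A = {}" using R by auto
      ultimately have "card (R \<union> A) = N" using R A fA by (simp add: card_Un_disjoint)
      then show "T \<in> {T. T \<subseteq> U \<and> card T = N \<and> A \<subseteq> T}" using T R A by auto
    qed
  qed
  then have "card {T. T \<subseteq> U \<and> card T = N \<and> A \<subseteq> T} = card {R. R \<subseteq> U - A \<and> card R = N - card A}"
    by (rule bij_betw_same_card)
  also have "\<dots> = card (U - A) choose (N - card A)" using U by (simp add: n_subsets)
  also have "card (U - A) = card U - card A" using A fA by (simp add: card_Diff_subset)
  finally show ?thesis .
qed

lemma card_supsets_big:
  assumes U: "finite U" and A: "card A > N"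
  shows "card {T. T \<subseteq> U \<and> card T = N \<and> A \<subseteq> T} = 0"
proof -
  have "{T. T \<subseteq> U \<and> card T = N \<and> A \<subseteq> T} = {}"
  proof safe
    fix T assume "T \<subseteq> U" "A \<subseteq> T" "N = card T"
    then have "card A \<le> card T" using U by (meson card_mono finite_subset)
    then show "T \<in> {}" using A \<open>N = card T\<close> by simp
  qed
  then show ?thesis by (metis card.empty)
qed

lemma choose_ratio_bound:
  assumes "m \<le> N" "N \<le> S"
  shows "real ((S - m) choose (N - m)) \<le> real (S choose N) * (real N / real S) ^ m"
  using assms(1)
proof (induction m)
  case 0 then show ?case by simp
next
  case (Suc m)
  have IH: "real ((S - m) choose (N - m)) \<le> real (S choose N) * (real N / real S) ^ m"
    using Suc by simp
  have pos: "0 < N - m" using Suc by simp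
  have e1: "real (N - m) * real ((S - m) choose (N - m)) = real (S - m) * real ((S - m - 1) choose (N - m - 1))"
    using times_binomial_minus1_eq[OF pos, of "S - m"] by (metis of_nat_mult)
  have Spos: "real (S - m) > 0" using Suc assms by simp
  have e2: "real ((S - m - 1) choose (N - m - 1)) = real (N - m) / real (S - m) * real ((S - m) choose (N - m))"
    using e1 Spos by (simp add: eq_divide_eq field_simps)
  have eq: "real ((S - Suc m) choose (N - Suc m)) = real (N - m) / real (S - m) * real ((S - m) choose (N - m))"
  proof -
    have h1: "S - Suc m = S - m - 1" "N - Suc m = N - m - 1" by arith+
    show ?thesis unfolding h1 by (rule e2)
  qed
  have cross: "real (N - m) * real S \<le> real N * real (S - m)"
  proof -
    have "real m * real N \<le> real m * real S" using assms by (intro mult_left_mono) auto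
    then show ?thesis using Suc assms by (simp add: of_nat_diff algebra_simps)
  qed
  have r: "real (N - m) / real (S - m) \<le> real N / real S"
    using cross Spos Suc assms by (simp add: divide_simps)
  have "real ((S - Suc m) choose (N - Suc m)) \<le> real N / real S * real ((S - m) choose (N - m))"
    unfolding eq by (intro mult_right_mono r) simp
  also have "\<dots> \<le> real N / real S * (real (S choose N) * (real N / real S) ^ m)"
    by (intro mult_left_mono IH) simp
  finally show ?case by (simp add: algebra_simps)
qed



lemma pow_sum_subsets:
  fixes z :: real
  assumes "finite X"
  shows "(1 + z) ^ card X = (\<Sum>A\<in>Pow X. z ^ card A)"
proof -
  have "(\<Prod>x\<in>X. z + 1) = (\<Sum>A\<in>Pow X. (\<Prod>x\<in>A. z) * (\<Prod>x\<in>X - A. 1))"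
    by (rule prod_add[OF assms])
  then show ?thesis by (simp add: add.commute)
qed

lemma card_supsets_bound:
  assumes U: "finite U" and A: "A \<subseteq> U" and N: "N \<le> card U"
  shows "real (card {T. T \<subseteq> U \<and> card T = N \<and> A \<subseteq> T}) \<le> real (card U choose N) * (real N / real (card U)) ^ card A"
proof (cases "card A \<le> N")
  case True
  then show ?thesis using card_supsets[OF U A True] choose_ratio_bound[OF True N] by simp
next
  case False
  then show ?thesis using card_supsets_big[OF U, of N A] by simp
qed

lemma chernoff_subset:
  fixes U B :: "'a set" and N :: nat and \<epsilon> :: real
  assumes U: "finite U" and B: "B \<subseteq> U" and N1: "1 \<le> N" and NS: "N \<le> card U"
    and e0: "0 < \<epsilon>" and e1: "\<epsilon> \<le> 1"
  shows "real (card {T. T \<subseteq> U \<and> card T = N \<and>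
            real (card (T \<inter> B)) > real N * real (card B) / real (card U) + \<epsilon> * real N})
         \<le> exp (- (\<epsilon>\<^sup>2 * real N / 4)) * real (card U choose N)"
proof -
  define S where "S = card U"
  define b where "b = card B"
  define l where "l = \<epsilon> / 2"
  define z where "z = exp l - 1"
  define \<mu> where "\<mu> = real N * real b / real S"
  define c where "c = \<mu> + \<epsilon> * real N"
  define \<T> where "\<T> = {T. T \<subseteq> U \<and> card T = N}"
  define Bad where "Bad = {T. T \<subseteq> U \<and> card T = N \<and> real (card (T \<inter> B)) > c}"
  have fB: "finite B" using B U finite_subset by blast
  have Spos: "real S > 0" using N1 NS S_def by simp
  have z0: "z \<ge> 0" unfolding z_def l_def using e0 by simp
  have fT: "finite \<T>" unfolding \<T>_def using U by simp
  have Bad_sub: "Bad \<subseteq> \<T>" unfolding Bad_def \<T>_def by auto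
  have cardT: "card \<T> = S choose N" unfolding \<T>_def S_def using U by (simp add: n_subsets)
  have eqA: "(\<Sum>T\<in>\<T>. (1 + z) ^ card (T \<inter> B)) = (\<Sum>A\<in>Pow B. z ^ card A * real (card {T. T \<subseteq> U \<and> card T = N \<and> A \<subseteq> T}))"
  proof -
    have "(\<Sum>T\<in>\<T>. (1 + z) ^ card (T \<inter> B)) = (\<Sum>T\<in>\<T>. \<Sum>A\<in>Pow (T \<inter> B). z ^ card A)"
      using fB by (intro sum.cong refl pow_sum_subsets) auto
    also have "\<dots> = (\<Sum>T\<in>\<T>. \<Sum>A\<in>Pow B. if A \<subseteq> T then z ^ card A else 0)"
    proof (rule sum.cong[OF refl])
      fix T assume "T \<in> \<T>"
      have "Pow (T \<inter> B) = {A \<in> Pow B. A \<subseteq> T}" by auto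
      have e: "(\<Sum>A\<in>Pow B. if A \<subseteq> T then z ^ card A else 0) = (\<Sum>A\<in>{A \<in> Pow B. A \<subseteq> T}. z ^ card A)"
        by (rule sum.inter_filter[symmetric]) (use fB in simp)
      show "(\<Sum>A\<in>Pow (T \<inter> B). z ^ card A) = (\<Sum>A\<in>Pow B. if A \<subseteq> T then z ^ card A else 0)"
        by (simp only: \<open>Pow (T \<inter> B) = {A \<in> Pow B. A \<subseteq> T}\<close> e)
    qed
    also have "\<dots> = (\<Sum>A\<in>Pow B. \<Sum>T\<in>\<T>. if A \<subseteq> T then z ^ card A else 0)"
      by (rule sum.swap)
    also have "\<dots> = (\<Sum>A\<in>Pow B. z ^ card A * real (card {T. T \<subseteq> U \<and> card T = N \<and> A \<subseteq> T}))"
    proof (intro sum.cong refl)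
      fix A assume "A \<in> Pow B"
      have "{T. T \<subseteq> U \<and> card T = N \<and> A \<subseteq> T} = {T \<in> \<T>. A \<subseteq> T}" unfolding \<T>_def by auto
      then show "(\<Sum>T\<in>\<T>. if A \<subseteq> T then z ^ card A else 0) = z ^ card A * real (card {T. T \<subseteq> U \<and> card T = N \<and> A \<subseteq> T})"
        using fT by (simp add: sum.inter_filter[symmetric])
    qed
    finally show ?thesis .
  qed
  have key: "(\<Sum>T\<in>\<T>. (1 + z) ^ card (T \<inter> B)) \<le> real (S choose N) * exp (z * \<mu>)"
  proof -
    have "(\<Sum>A\<in>Pow B. z ^ card A * real (card {T. T \<subseteq> U \<and> card T = N \<and> A \<subseteq> T}))
        \<le> (\<Sum>A\<in>Pow B. z ^ card A * (real (S choose N) * (real N / real S) ^ card A))"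
    proof (intro sum_mono mult_left_mono)
      fix A assume "A \<in> Pow B"
      then show "real (card {T. T \<subseteq> U \<and> card T = N \<and> A \<subseteq> T}) \<le> real (S choose N) * (real N / real S) ^ card A"
        using card_supsets_bound[OF U _ NS, of A] B unfolding S_def by auto
    qed (use z0 in simp)
    also have "\<dots> = real (S choose N) * (\<Sum>A\<in>Pow B. (z * real N / real S) ^ card A)"
      unfolding sum_distrib_left by (intro sum.cong refl) (simp add: power_mult_distrib power_divide)
    also have "\<dots> = real (S choose N) * (1 + z * real N / real S) ^ b"
      using pow_sum_subsets[OF fB, of "z * real N / real S"] b_def by simp
    also have "\<dots> \<le> real (S choose N) * exp (z * real N / real S) ^ b"
      by (intro mult_left_mono power_mono) (use z0 Spos in auto)
    also have "\<dots> = real (S choose N) * exp (z * \<mu>)"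
      by (simp add: \<mu>_def exp_of_nat_mult[symmetric] algebra_simps)
    finally show ?thesis using eqA by simp
  qed
  have bad: "real (card Bad) * exp (l * c) \<le> (\<Sum>T\<in>\<T>. (1 + z) ^ card (T \<inter> B))"
  proof -
    have "real (card Bad) * exp (l * c) = (\<Sum>T\<in>Bad. exp (l * c))" by simp
    also have "\<dots> \<le> (\<Sum>T\<in>Bad. (1 + z) ^ card (T \<inter> B))"
    proof (intro sum_mono)
      fix T assume "T \<in> Bad"
      then have "c < real (card (T \<inter> B))" unfolding Bad_def by auto
      then have "exp (l * c) \<le> exp (l * real (card (T \<inter> B)))"
        using e0 l_def by (simp add: mult_left_mono)
      also have "\<dots> = (1 + z) ^ card (T \<inter> B)"
        by (simp add: z_def exp_of_nat_mult[symmetric] mult.commute)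
      finally show "exp (l * c) \<le> (1 + z) ^ card (T \<inter> B)" .
    qed
    also have "\<dots> \<le> (\<Sum>T\<in>\<T>. (1 + z) ^ card (T \<inter> B))"
      by (intro sum_mono2 fT Bad_sub) (use z0 in simp)
    finally show ?thesis .
  qed
  have expo: "z * \<mu> - l * c \<le> - (\<epsilon>\<^sup>2 * real N / 4)"
  proof -
    have zl: "z \<le> l + l\<^sup>2"
    proof -
      have "0 \<le> l" "l \<le> 1" using e0 e1 unfolding l_def by auto
      from exp_bound[OF this] show ?thesis unfolding z_def by simp
    qed
    have mu0: "0 \<le> \<mu>" unfolding \<mu>_def by simp
    have muN: "\<mu> \<le> real N"
    proof -
      have "b \<le> S" unfolding b_def S_def using B U card_mono by blast
      then have "real b / real S \<le> 1" using Spos by simp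
      then show ?thesis unfolding \<mu>_def using mult_left_mono[of "real b / real S" 1 "real N"] by simp
    qed
    have "z * \<mu> \<le> (l + l\<^sup>2) * \<mu>" using zl mu0 by (rule mult_right_mono)
    moreover have "l\<^sup>2 * \<mu> \<le> l\<^sup>2 * real N" using muN by (simp add: mult_left_mono)
    ultimately have "z * \<mu> - l * c \<le> l\<^sup>2 * real N - l * \<epsilon> * real N"
      unfolding c_def by (simp add: algebra_simps)
    also have "\<dots> = - (\<epsilon>\<^sup>2 * real N / 4)" unfolding l_def by (simp add: power2_eq_square field_simps)
    finally show ?thesis .
  qed
  have "real (card Bad) * exp (l * c) \<le> real (S choose N) * exp (z * \<mu>)" using bad key by linarith
  then have "real (card Bad) \<le> real (S choose N) * exp (z * \<mu>) / exp (l * c)"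
    by (simp add: pos_le_divide_eq)
  also have "\<dots> = real (S choose N) * exp (z * \<mu> - l * c)" by (simp add: exp_diff)
  also have "\<dots> \<le> real (S choose N) * exp (- (\<epsilon>\<^sup>2 * real N / 4))"
    using expo by (intro mult_left_mono) auto
  finally show ?thesis unfolding Bad_def c_def \<mu>_def S_def b_def by (simp add: mult.commute)
qed




definition Tset :: "nat \<Rightarrow> (nat \<Rightarrow> nat) \<Rightarrow> (nat \<times> nat) set set" where
  "Tset N x = {T. T \<subseteq> offspring N x \<and> card T = N}"

definition vfun :: "(nat \<times> nat) set \<Rightarrow> nat \<Rightarrow> nat" where
  "vfun T k = card {j. (k, j) \<in> T}"

definition Ck :: "nat \<Rightarrow> (nat \<Rightarrow> nat) \<Rightarrow> nat \<Rightarrow> (nat \<times> nat) set" where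
  "Ck N x k = {p \<in> offspring N x. fst p = k}"

lemma offspring_Sigma: "offspring N x = Sigma {..<N} (\<lambda>k. {..<x k})"
  unfolding offspring_def by auto

lemma finite_offspring[simp]: "finite (offspring N x)"
  unfolding offspring_Sigma by auto

lemma card_offspring: "card (offspring N x) = (\<Sum>k<N. x k)"
  unfolding offspring_Sigma by (simp add: card_SigmaI)

lemma Ck_eq: "k < N \<Longrightarrow> Ck N x k = Pair k ` {..<x k}"
  unfolding Ck_def offspring_def by auto

lemma card_Ck: "k < N \<Longrightarrow> card (Ck N x k) = x k"
  by (simp add: Ck_eq card_image inj_on_def)

lemma Ck_sub: "Ck N x k \<subseteq> offspring N x"
  unfolding Ck_def by auto

lemma vfun_eq:
  assumes "T \<subseteq> offspring N x" "k < N"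
  shows "vfun T k = card (T \<inter> Ck N x k)"
proof -
  have "T \<inter> Ck N x k = Pair k ` {j. (k, j) \<in> T}"
    using assms unfolding Ck_def by auto
  then show ?thesis unfolding vfun_def by (simp add: card_image inj_on_def)
qed

lemma finite_Tset[simp]: "finite (Tset N x)"
  unfolding Tset_def by simp

lemma card_Tset: "card (Tset N x) = (\<Sum>k<N. x k) choose N"
  unfolding Tset_def by (simp add: n_subsets card_offspring)

lemma N_le_S:
  fixes x :: "nat \<Rightarrow> nat"
  assumes "\<forall>k<N. 1 \<le> x k"
  shows "N \<le> (\<Sum>k<N. x k)"
proof -
  have "(\<Sum>k<N. (1::nat)) \<le> (\<Sum>k<N. x k)" using assms by (intro sum_mono) auto
  then show ?thesis by simp
qed


lemma inner_bad_count:
  fixes x :: "nat \<Rightarrow> nat"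
  assumes N1: "1 \<le> N" and x: "\<forall>k<N. 1 \<le> x k" and e0: "0 < \<epsilon>" and e1: "\<epsilon> \<le> 1"
  shows "real (card {T \<in> Tset N x. \<exists>k<N. \<bar>real (vfun T k) / real N - real (x k) / real (\<Sum>i<N. x i)\<bar> > \<epsilon>})
         \<le> 2 * real N * exp (- (\<epsilon>\<^sup>2 * real N / 4)) * real (card (Tset N x))"
proof -
  define U where "U = offspring N x"
  define S where "S = (\<Sum>i<N. x i)"
  have cU: "card U = S" unfolding U_def S_def by (rule card_offspring)
  have NS: "N \<le> S" unfolding S_def by (rule N_le_S[OF x])
  have Spos: "real S > 0" using N1 NS by simp
  have Npos: "real N > 0" using N1 by simp
  define E where "E = exp (- (\<epsilon>\<^sup>2 * real N / 4))"
  define Up where "Up k = {T. T \<subseteq> U \<and> card T = N \<and>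
            real (card (T \<inter> Ck N x k)) > real N * real (card (Ck N x k)) / real (card U) + \<epsilon> * real N}" for k
  define Lo where "Lo k = {T. T \<subseteq> U \<and> card T = N \<and>
            real (card (T \<inter> (U - Ck N x k))) > real N * real (card (U - Ck N x k)) / real (card U) + \<epsilon> * real N}" for k
  have cUp: "real (card (Up k)) \<le> E * real (S choose N)" for k
    unfolding Up_def E_def cU[symmetric]
    by (rule chernoff_subset) (use N1 NS cU e0 e1 Ck_sub U_def in auto)
  have cLo: "real (card (Lo k)) \<le> E * real (S choose N)" for k
    unfolding Lo_def E_def cU[symmetric]
    by (rule chernoff_subset) (use N1 NS cU e0 e1 U_def in auto)
  have sub: "{T \<in> Tset N x. \<exists>k<N. \<bar>real (vfun T k) / real N - real (x k) / real S\<bar> > \<epsilon>}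
           \<subseteq> (\<Union>k\<in>{..<N}. Up k \<union> Lo k)"
  proof
    fix T assume "T \<in> {T \<in> Tset N x. \<exists>k<N. \<bar>real (vfun T k) / real N - real (x k) / real S\<bar> > \<epsilon>}"
    then obtain k where T: "T \<subseteq> U" "card T = N" and k: "k < N"
      and d: "\<bar>real (vfun T k) / real N - real (x k) / real S\<bar> > \<epsilon>"
      unfolding Tset_def U_def by auto
    define v where "v = card (T \<inter> Ck N x k)"
    have v: "vfun T k = v" unfolding v_def using vfun_eq T k U_def by simp
    have cC: "card (Ck N x k) = x k" by (rule card_Ck[OF k])
    have CU: "Ck N x k \<subseteq> U" using Ck_sub U_def by simp
    have xS: "x k \<le> S" using CU cC cU card_mono[of U "Ck N x k"] U_def by simp
    have fT: "finite T" using T(1) unfolding U_def by (rule finite_subset) simp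
    have cD: "card (T \<inter> (U - Ck N x k)) = N - v"
    proof -
      have "T \<inter> (U - Ck N x k) = T - (T \<inter> Ck N x k)" using T by auto
      then show ?thesis using fT T v_def by (simp add: card_Diff_subset)
    qed
    have vN: "v \<le> N" unfolding v_def using T fT by (metis Int_lower1 card_mono)
    have cUC: "card (U - Ck N x k) = S - x k" using CU cC cU card_Diff_subset[of "Ck N x k" U] finite_subset[OF CU] U_def by simp
    show "T \<in> (\<Union>k\<in>{..<N}. Up k \<union> Lo k)"
    proof (cases "real v / real N - real (x k) / real S > \<epsilon>")
      case True
      have eq: "(real v / real N - real (x k) / real S) * real N = real v - real N * real (x k) / real S"
        using Npos by (simp add: left_diff_distrib)
      have "\<epsilon> * real N < (real v / real N - real (x k) / real S) * real N"
        using True Npos by (rule mult_strict_right_mono)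
      then have "real v > real N * real (x k) / real S + \<epsilon> * real N"
        unfolding eq by linarith
      then have "T \<in> Up k" unfolding Up_def using T v_def cC cU by simp
      then show ?thesis using k by auto
    next
      case False
      then have "real (x k) / real S - real v / real N > \<epsilon>" using d v by auto
      then have "\<epsilon> * real N < (real (x k) / real S - real v / real N) * real N"
        using Npos by (rule mult_strict_right_mono)
      moreover have "(real (x k) / real S - real v / real N) * real N = real N * real (x k) / real S - real v"
        using Npos by (simp add: left_diff_distrib)
      ultimately have "real N * real (x k) / real S - real v > \<epsilon> * real N" by linarith
      moreover have "real N * real (S - x k) / real S = real N - real N * real (x k) / real S"
        using Spos xS by (simp add: of_nat_diff diff_divide_distrib right_diff_distrib)
      ultimately have "real (N - v) > real N * real (S - x k) / real S + \<epsilon> * real N"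
        using vN by (simp add: of_nat_diff)
      then have "T \<in> Lo k" unfolding Lo_def using T cD cUC cU by simp
      then show ?thesis using k by auto
    qed
  qed
  have fin: "finite (Up k)" "finite (Lo k)" for k
    unfolding Up_def Lo_def U_def by simp_all
  have "card {T \<in> Tset N x. \<exists>k<N. \<bar>real (vfun T k) / real N - real (x k) / real S\<bar> > \<epsilon>}
        \<le> card (\<Union>k\<in>{..<N}. Up k \<union> Lo k)"
    by (rule card_mono[OF _ sub]) (use fin in auto)
  also have "\<dots> \<le> (\<Sum>k<N. card (Up k \<union> Lo k))" by (rule card_UN_le) simp
  also have "\<dots> \<le> (\<Sum>k<N. card (Up k) + card (Lo k))" by (intro sum_mono card_Un_le)
  finally have H: "card {T \<in> Tset N x. \<exists>k<N. \<bar>real (vfun T k) / real N - real (x k) / real S\<bar> > \<epsilon>}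
        \<le> (\<Sum>k<N. card (Up k) + card (Lo k))" .
  have "real (card {T \<in> Tset N x. \<exists>k<N. \<bar>real (vfun T k) / real N - real (x k) / real S\<bar> > \<epsilon>})
        \<le> real (\<Sum>k<N. card (Up k) + card (Lo k))"
    using H by (simp only: of_nat_le_iff)
  also have "\<dots> = (\<Sum>k<N. real (card (Up k)) + real (card (Lo k)))"
    by simp
  also have "\<dots> \<le> (\<Sum>k<N. 2 * (E * real (S choose N)))"
  proof (intro sum_mono)
    fix k show "real (card (Up k)) + real (card (Lo k)) \<le> 2 * (E * real (S choose N))"
      using cUp[of k] cLo[of k] by linarith
  qed
  also have "\<dots> = 2 * real N * E * real (card (Tset N x))"
    by (simp add: card_Tset S_def)
  finally show ?thesis unfolding E_def S_def .
qed

lemma card_offdiag: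
  assumes "finite X"
  shows "card {p. fst p \<in> X \<and> snd p \<in> X \<and> fst p \<noteq> snd p} = card X * (card X - 1)"
proof -
  have eq: "{p. fst p \<in> X \<and> snd p \<in> X \<and> fst p \<noteq> snd p} = X \<times> X - (\<lambda>i. (i, i)) ` X" by auto
  have "card ((\<lambda>i. (i, i)) ` X) = card X" by (simp add: card_image inj_on_def)
  moreover have "(\<lambda>i. (i, i)) ` X \<subseteq> X \<times> X" by auto
  ultimately have "card (X \<times> X - (\<lambda>i. (i, i)) ` X) = card X * card X - card X"
    using assms by (simp add: card_Diff_subset card_cartesian_product finite_subset)
  then show ?thesis unfolding eq by (simp add: diff_mult_distrib2)
qed

lemma choose_two_identity:
  assumes "2 \<le> N" "N \<le> S"
  shows "N * (N - 1) * (S choose N) = S * (S - 1) * ((S - 2) choose (N - 2))"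
proof -
  have a: "N * (S choose N) = S * ((S - 1) choose (N - 1))"
    using times_binomial_minus1_eq[of N S] assms by simp
  have b: "(N - 1) * ((S - 1) choose (N - 1)) = (S - 1) * ((S - 1 - 1) choose (N - 1 - 1))"
    using times_binomial_minus1_eq[of "N - 1" "S - 1"] assms by simp
  have "N * (N - 1) * (S choose N) = (N - 1) * (N * (S choose N))" by simp
  also have "\<dots> = S * ((N - 1) * ((S - 1) choose (N - 1)))" unfolding a by simp
  also have "\<dots> = S * (S - 1) * ((S - 2) choose (N - 2))" unfolding b
    by (simp add: diff_diff_add numeral_2_eq_2)
  finally show ?thesis .
qed

lemma pair_sum_nat:
  fixes x :: "nat \<Rightarrow> nat"
  assumes k: "k < N" and N2: "2 \<le> N"
  shows "(\<Sum>T\<in>Tset N x. vfun T k * (vfun T k - 1))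
         = x k * (x k - 1) * (((\<Sum>i<N. x i) - 2) choose (N - 2))"
proof -
  define U where "U = offspring N x"
  define C where "C = Ck N x k"
  define P where "P = {p. fst p \<in> C \<and> snd p \<in> C \<and> fst p \<noteq> snd p}"
  have CU: "C \<subseteq> U" unfolding C_def U_def by (rule Ck_sub)
  have fC: "finite C" using CU unfolding U_def by (rule finite_subset) simp
  have fP: "finite P"
  proof -
    have "P \<subseteq> C \<times> C" unfolding P_def by auto
    then show ?thesis using fC finite_subset by blast
  qed
  have cP: "card P = x k * (x k - 1)" unfolding P_def using card_offdiag[OF fC] card_Ck[OF k] C_def by simp
  have step1: "vfun T k * (vfun T k - 1) = (\<Sum>p\<in>P. if fst p \<in> T \<and> snd p \<in> T then 1 else 0)"
    if T: "T \<in> Tset N x" for T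
  proof -
    have TU: "T \<subseteq> U" using T unfolding Tset_def U_def by auto
    have fT: "finite T" using TU unfolding U_def by (rule finite_subset) simp
    have "vfun T k = card (T \<inter> C)" using vfun_eq[of T N x k] TU k U_def C_def by simp
    then have "vfun T k * (vfun T k - 1) = card {p. fst p \<in> T \<inter> C \<and> snd p \<in> T \<inter> C \<and> fst p \<noteq> snd p}"
      using card_offdiag[of "T \<inter> C"] fT by simp
    also have "{p. fst p \<in> T \<inter> C \<and> snd p \<in> T \<inter> C \<and> fst p \<noteq> snd p} = {p \<in> P. fst p \<in> T \<and> snd p \<in> T}"
      unfolding P_def by auto
    also have "card \<dots> = (\<Sum>p\<in>P. if fst p \<in> T \<and> snd p \<in> T then 1 else 0)"
      using fP by (simp add: sum.If_cases Int_def)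
    finally show ?thesis .
  qed
  have "(\<Sum>T\<in>Tset N x. vfun T k * (vfun T k - 1))
        = (\<Sum>T\<in>Tset N x. \<Sum>p\<in>P. if fst p \<in> T \<and> snd p \<in> T then 1 else 0)"
    using step1 by (rule sum.cong[OF refl])
  also have "\<dots> = (\<Sum>p\<in>P. \<Sum>T\<in>Tset N x. if fst p \<in> T \<and> snd p \<in> T then 1 else 0)"
    by (rule sum.swap)
  also have "\<dots> = (\<Sum>p\<in>P. ((\<Sum>i<N. x i) - 2) choose (N - 2))"
  proof (rule sum.cong[OF refl])
    fix p assume p: "p \<in> P"
    have A: "{fst p, snd p} \<subseteq> U" "card {fst p, snd p} = 2" using p CU unfolding P_def by auto
    have "(\<Sum>T\<in>Tset N x. if fst p \<in> T \<and> snd p \<in> T then 1 else 0)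
          = card {T \<in> Tset N x. fst p \<in> T \<and> snd p \<in> T}"
      by (simp add: sum.If_cases Int_def)
    also have "{T \<in> Tset N x. fst p \<in> T \<and> snd p \<in> T} = {T. T \<subseteq> U \<and> card T = N \<and> {fst p, snd p} \<subseteq> T}"
      unfolding Tset_def U_def by auto
    also have "card \<dots> = (card U - 2) choose (N - 2)"
      using card_supsets[of U "{fst p, snd p}" N] A N2 U_def by simp
    finally show "(\<Sum>T\<in>Tset N x. if fst p \<in> T \<and> snd p \<in> T then 1 else 0) = ((\<Sum>i<N. x i) - 2) choose (N - 2)"
      unfolding U_def card_offspring .
  qed
  also have "\<dots> = x k * (x k - 1) * (((\<Sum>i<N. x i) - 2) choose (N - 2))" using cP by simp
  finally show ?thesis .
qed

lemma pair_expectation: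
  fixes x :: "nat \<Rightarrow> nat"
  assumes k: "k < N" and N2: "2 \<le> N" and x: "\<forall>k<N. 1 \<le> x k"
  shows "measure_pmf.expectation (pmf_of_set (Tset N x)) (\<lambda>T. real (vfun T k) * (real (vfun T k) - 1))
       = real (x k) * (real (x k) - 1) * real N * (real N - 1) / (real (\<Sum>i<N. x i) * (real (\<Sum>i<N. x i) - 1))"
proof -
  define S where "S = (\<Sum>i<N. x i)"
  have NS: "N \<le> S" unfolding S_def by (rule N_le_S[OF x])
  have ne: "Tset N x \<noteq> {}"
  proof -
    have "card (Tset N x) = S choose N" unfolding S_def by (rule card_Tset)
    then have "card (Tset N x) > 0" using NS by simp
    then show ?thesis by auto
  qed
  have rv: "real v * (real v - 1) = real (v * (v - 1))" for v :: nat by (cases v) (auto simp: algebra_simps)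
  have "measure_pmf.expectation (pmf_of_set (Tset N x)) (\<lambda>T. real (vfun T k) * (real (vfun T k) - 1))
        = (\<Sum>T\<in>Tset N x. real (vfun T k) * (real (vfun T k) - 1)) / real (card (Tset N x))"
    using ne by (simp add: integral_pmf_of_set)
  also have "(\<Sum>T\<in>Tset N x. real (vfun T k) * (real (vfun T k) - 1)) = real (\<Sum>T\<in>Tset N x. vfun T k * (vfun T k - 1))"
    by (simp add: rv)
  also have "\<dots> = real (x k * (x k - 1) * ((S - 2) choose (N - 2)))"
    using pair_sum_nat[OF k N2, of x] S_def by simp
  also have "real (card (Tset N x)) = real (S choose N)" unfolding S_def card_Tset ..
  finally have e: "measure_pmf.expectation (pmf_of_set (Tset N x)) (\<lambda>T. real (vfun T k) * (real (vfun T k) - 1))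
       = real (x k * (x k - 1) * ((S - 2) choose (N - 2))) / real (S choose N)" .
  have id: "real (N * (N - 1) * (S choose N)) = real (S * (S - 1) * ((S - 2) choose (N - 2)))"
    using choose_two_identity[OF N2 NS] by simp
  have S2: "S \<ge> 2" using N2 NS by simp
  have cpos: "real (S choose N) > 0" using NS by simp
  have Spos: "real S * (real S - 1) > 0" using S2 by simp
  have "real (x k * (x k - 1) * ((S - 2) choose (N - 2))) / real (S choose N)
      = real (x k) * (real (x k) - 1) * real N * (real N - 1) / (real S * (real S - 1))"
  proof -
    define A where "A = real (x k) * (real (x k) - 1)"
    define C2 where "C2 = real ((S - 2) choose (N - 2))"
    define CS where "CS = real (S choose N)"
    define Q where "Q = real S * (real S - 1)"
    have hA: "real (x k * (x k - 1)) = A" unfolding A_def using rv[of "x k"] by linarith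
    have hid: "C2 * Q = CS * (real N * (real N - 1))"
      unfolding C2_def Q_def CS_def using id S2 N2 by (simp add: of_nat_diff algebra_simps)
    have "real (x k * (x k - 1) * ((S - 2) choose (N - 2))) / real (S choose N) = A * C2 / CS"
      unfolding hA[symmetric] C2_def CS_def by simp
    also have "\<dots> = A * (C2 * Q) / (CS * Q)"
    proof -
      have "Q \<noteq> 0" using Spos unfolding Q_def by linarith
      then show ?thesis by (simp add: mult.assoc)
    qed
    also have "\<dots> = A * (CS * (real N * (real N - 1))) / (CS * Q)" unfolding hid ..
    also have "\<dots> = A * (real N * (real N - 1)) / Q" using cpos unfolding CS_def by simp
    finally show ?thesis unfolding A_def Q_def by (simp add: mult.assoc)
  qed
  with e show ?thesis unfolding S_def by simp
qed

lemma expectation_bind_pmf_bounded: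
  fixes g :: "'b \<Rightarrow> real"
  assumes bnd: "\<And>x y. x \<in> set_pmf M \<Longrightarrow> y \<in> set_pmf (f x) \<Longrightarrow> \<bar>g y\<bar> \<le> B"
  shows "measure_pmf.expectation (bind_pmf M f) g = measure_pmf.expectation M (\<lambda>x. measure_pmf.expectation (f x) g)"
proof -
  define g' where "g' y = max (- \<bar>B\<bar>) (min \<bar>B\<bar> (g y))" for y
  have g'b: "\<bar>g' y\<bar> \<le> \<bar>B\<bar>" for y unfolding g'_def by auto
  have eq: "g y = g' y" if "x \<in> set_pmf M" "y \<in> set_pmf (f x)" for x y
    using bnd[OF that] unfolding g'_def by auto
  have "measure_pmf.expectation (bind_pmf M f) g = measure_pmf.expectation (bind_pmf M f) g'"
    by (rule integral_cong_AE) (auto simp: AE_measure_pmf_iff eq)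
  also have "\<dots> = measure_pmf.expectation M (\<lambda>x. measure_pmf.expectation (f x) g')"
    unfolding measure_pmf_bind
    by (rule integral_bind[where K="count_space UNIV" and B="\<bar>B\<bar>" and B'=1])
       (auto simp: g'b measure_pmf.emeasure_space_1 space_subprob_algebra
         subprob_space_measure_pmf)
  also have "\<dots> = measure_pmf.expectation M (\<lambda>x. measure_pmf.expectation (f x) g)"
  proof (rule integral_cong_AE)
    show "AE x in measure_pmf M. measure_pmf.expectation (f x) g' = measure_pmf.expectation (f x) g"
      unfolding AE_measure_pmf_iff
    proof
      fix x assume x: "x \<in> set_pmf M"
      show "measure_pmf.expectation (f x) g' = measure_pmf.expectation (f x) g"
        by (rule integral_cong_AE) (auto simp: AE_measure_pmf_iff eq[OF x])
    qed
  qed auto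
  finally show ?thesis .
qed

lemma prob_bind_pmf:
  "measure_pmf.prob (bind_pmf M f) A = measure_pmf.expectation M (\<lambda>x. measure_pmf.prob (f x) A)"
proof -
  have "measure_pmf.prob (bind_pmf M f) A = measure_pmf.expectation (bind_pmf M f) (indicator A)"
    by simp
  also have "\<dots> = measure_pmf.expectation M (\<lambda>x. measure_pmf.expectation (f x) (indicator A))"
    by (rule expectation_bind_pmf_bounded[where B=1]) (auto simp: indicator_def)
  also have "\<dots> = measure_pmf.expectation M (\<lambda>x. measure_pmf.prob (f x) A)" by simp
  finally show ?thesis .
qed

lemma cannings_alt:
  "cannings q N = bind_pmf (Pi_pmf {..<N} 0 (\<lambda>_. q))
       (\<lambda>x. map_pmf (\<lambda>T. (x, vfun T)) (pmf_of_set (Tset N x)))"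
  unfolding cannings_def Tset_def vfun_def[abs_def] by simp

lemma support_Pi:
  fixes N :: nat
  assumes "x \<in> set_pmf (Pi_pmf {..<N} 0 (\<lambda>_. q))" "k < N"
  shows "x k \<in> set_pmf q"
proof -
  have "set_pmf (Pi_pmf {..<N} 0 (\<lambda>_. q)) = PiE_dflt {..<N} 0 (set_pmf \<circ> (\<lambda>_. q))"
    by (rule set_Pi_pmf) simp
  then show ?thesis using assms unfolding PiE_dflt_def by auto
qed

lemma bounded_integrable_pmf:
  fixes f :: "'a \<Rightarrow> real"
  assumes "\<And>x. x \<in> set_pmf M \<Longrightarrow> \<bar>f x\<bar> \<le> B"
  shows "integrable (measure_pmf M) f"
  by (rule measure_pmf.integrable_const_bound[where B=B]) (auto simp: AE_measure_pmf_iff assms)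

lemma Tset_nonempty:
  fixes x :: "nat \<Rightarrow> nat"
  assumes "\<forall>k<N. 1 \<le> x k"
  shows "Tset N x \<noteq> {}"
proof -
  have "card (Tset N x) = (\<Sum>k<N. x k) choose N" by (rule card_Tset)
  then have "card (Tset N x) > 0" using N_le_S[OF assms] by simp
  then show ?thesis by auto
qed

lemma good_inner_zero:
  fixes x :: "nat \<Rightarrow> nat"
  assumes x1: "\<forall>k<N. x k = 1" and e0: "0 < \<epsilon>"
  shows "{T \<in> Tset N x. \<exists>k<N. \<bar>real (vfun T k) / real N - real (x k) / real (\<Sum>i<N. x i)\<bar> > \<epsilon>} = {}"
proof -
  have S: "(\<Sum>i<N. x i) = N" using x1 by simp
  have "T = offspring N x" if "T \<in> Tset N x" for T
  proof -
    have "T \<subseteq> offspring N x" "card T = N" using that unfolding Tset_def by auto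
    moreover have "card (offspring N x) = N" using S card_offspring by simp
    ultimately show ?thesis by (metis card_subset_eq finite_offspring)
  qed
  moreover have "vfun (offspring N x) k = 1" if "k < N" for k
  proof -
    have "{j. (k, j) \<in> offspring N x} = {0}" using that x1 unfolding offspring_def by auto
    then show ?thesis unfolding vfun_def by simp
  qed
  ultimately show ?thesis using S x1 e0 by auto
qed

lemma event_bound:
  fixes q :: "nat pmf" and N :: nat and \<epsilon> :: real
  assumes q: "set_pmf q \<subseteq> {1..}" and N1: "1 \<le> N" and e0: "0 < \<epsilon>"
  shows "measure_pmf.prob (cannings q N)
           {(x, v). \<exists>k<N. \<bar>real (v k) / real N - real (x k) / real (\<Sum>i<N. x i)\<bar> > \<epsilon>}
         \<le> 2 * real N * exp (- ((min \<epsilon> 1)\<^sup>2 * real N / 4)) *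
           measure_pmf.prob (Pi_pmf {..<N} 0 (\<lambda>_. q)) {x. \<exists>k<N. x k \<noteq> 1}"
proof -
  define M where "M = Pi_pmf {..<N} 0 (\<lambda>_. q)"
  define Ev where "Ev = {(x, v). \<exists>k<N. \<bar>real (v k) / real N - real (x k) / real (\<Sum>i<N. x i)\<bar> > \<epsilon>}"
  define c where "c = 2 * real N * exp (- ((min \<epsilon> 1)\<^sup>2 * real N / 4))"
  define bad where "bad = {x::nat\<Rightarrow>nat. \<exists>k<N. x k \<noteq> 1}"
  define P where "P x = measure_pmf.prob (map_pmf (\<lambda>T. (x, vfun T)) (pmf_of_set (Tset N x))) Ev" for x
  have c0: "0 \<le> c" unfolding c_def by simp
  have x1: "\<forall>k<N. 1 \<le> x k" if "x \<in> set_pmf M" for x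
    using support_Pi[of x N q] that q unfolding M_def by force
  have Pbound: "P x \<le> c * indicator bad x" if x: "x \<in> set_pmf M" for x
  proof -
    have ne: "Tset N x \<noteq> {}" by (rule Tset_nonempty[OF x1[OF x]])
    define A where "A = {T \<in> Tset N x. \<exists>k<N. \<bar>real (vfun T k) / real N - real (x k) / real (\<Sum>i<N. x i)\<bar> > \<epsilon>}"
    have "P x = measure_pmf.prob (pmf_of_set (Tset N x)) ((\<lambda>T. (x, vfun T)) -` Ev)"
      unfolding P_def by simp
    also have "\<dots> = real (card (Tset N x \<inter> ((\<lambda>T. (x, vfun T)) -` Ev))) / real (card (Tset N x))"
      using ne by (simp add: measure_pmf_of_set)
    also have "Tset N x \<inter> ((\<lambda>T. (x, vfun T)) -` Ev) = A"
      unfolding A_def Ev_def by auto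
    finally have Px: "P x = real (card A) / real (card (Tset N x))" .
    show ?thesis
    proof (cases "x \<in> bad")
      case True
      define e' where "e' = min \<epsilon> 1"
      have e': "0 < e'" "e' \<le> 1" "e' \<le> \<epsilon>" unfolding e'_def using e0 by auto
      have "A \<subseteq> {T \<in> Tset N x. \<exists>k<N. \<bar>real (vfun T k) / real N - real (x k) / real (\<Sum>i<N. x i)\<bar> > e'}"
        unfolding A_def using e' by force
      then have "card A \<le> card {T \<in> Tset N x. \<exists>k<N. \<bar>real (vfun T k) / real N - real (x k) / real (\<Sum>i<N. x i)\<bar> > e'}"
        by (rule card_mono[rotated]) simp
      then have "real (card A) \<le> real (card {T \<in> Tset N x. \<exists>k<N. \<bar>real (vfun T k) / real N - real (x k) / real (\<Sum>i<N. x i)\<bar> > e'})"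
        by simp
      also have "\<dots> \<le> c * real (card (Tset N x))"
        using inner_bad_count[OF N1 x1[OF x] e'(1,2)] unfolding c_def e'_def by simp
      finally have "real (card A) \<le> c * real (card (Tset N x))" .
      moreover have "real (card (Tset N x)) > 0" using ne by (simp add: card_gt_0_iff)
      ultimately have "P x \<le> c" unfolding Px by (simp add: divide_le_eq)
      then show ?thesis using True by simp
    next
      case False
      then have "\<forall>k<N. x k = 1" unfolding bad_def by auto
      then have "A = {}" unfolding A_def using good_inner_zero e0 by blast
      then show ?thesis unfolding Px using False by simp
    qed
  qed
  have "measure_pmf.prob (cannings q N) Ev = measure_pmf.expectation M P"
    unfolding cannings_alt M_def P_def by (rule prob_bind_pmf)
  also have "\<dots> \<le> measure_pmf.expectation M (\<lambda>x. c * indicator bad x)"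
  proof (rule integral_mono_AE)
    show "integrable (measure_pmf M) P"
      by (rule bounded_integrable_pmf[where B=1]) (auto simp: P_def)
    show "integrable (measure_pmf M) (\<lambda>x. c * indicator bad x)"
      by (rule bounded_integrable_pmf[where B=c]) (use c0 in \<open>auto simp: indicator_def\<close>)
    show "AE x in measure_pmf M. P x \<le> c * indicator bad x"
      using Pbound by (simp add: AE_measure_pmf_iff)
  qed
  also have "\<dots> = c * measure_pmf.prob M bad" by simp
  finally show ?thesis unfolding Ev_def c_def M_def bad_def .
qed

lemma Pi_swap_expectation:
  fixes N k :: nat and q :: "nat pmf" and G :: "nat \<Rightarrow> nat \<Rightarrow> real"
  assumes k: "k < N"
  shows "measure_pmf.expectation (Pi_pmf {..<N} 0 (\<lambda>_. q)) (\<lambda>x. G (x 0) (\<Sum>i<N. x i))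
       = measure_pmf.expectation (Pi_pmf {..<N} 0 (\<lambda>_. q)) (\<lambda>x. G (x k) (\<Sum>i<N. x i))"
proof -
  define h where "h i = (if i = 0 then k else if i = k then 0 else i)" for i :: nat
  have hh: "h (h i) = i" for i unfolding h_def by auto
  have bij: "bij_betw h {..<N} {..<N}"
    by (rule bij_betw_byWitness[where f'=h]) (use k in \<open>auto simp: hh h_def\<close>)
  have out: "\<And>x. x \<notin> {..<N} \<Longrightarrow> h x \<notin> {..<N}" using k unfolding h_def by auto
  have eq: "Pi_pmf {..<N} 0 (\<lambda>_. q) = map_pmf (\<lambda>g. g \<circ> h) (Pi_pmf {..<N} 0 (\<lambda>_. q))"
    by (rule Pi_pmf_bij_betw[OF _ bij out]) simp
  have "measure_pmf.expectation (Pi_pmf {..<N} 0 (\<lambda>_. q)) (\<lambda>x. G (x 0) (\<Sum>i<N. x i))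
      = measure_pmf.expectation (map_pmf (\<lambda>g. g \<circ> h) (Pi_pmf {..<N} 0 (\<lambda>_. q))) (\<lambda>x. G (x 0) (\<Sum>i<N. x i))"
    by (simp only: eq[symmetric])
  also have "\<dots> = measure_pmf.expectation (Pi_pmf {..<N} 0 (\<lambda>_. q)) (\<lambda>x. G (x (h 0)) (\<Sum>i<N. x (h i)))"
    by simp
  also have "\<dots> = measure_pmf.expectation (Pi_pmf {..<N} 0 (\<lambda>_. q)) (\<lambda>x. G (x k) (\<Sum>i<N. x i))"
  proof -
    have "(\<Sum>i<N. x (h i)) = (\<Sum>i<N. x i)" for x :: "nat \<Rightarrow> nat"
      using sum.reindex_bij_betw[OF bij, of x] .
    moreover have "h 0 = k" unfolding h_def by simp
    ultimately show ?thesis by simp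
  qed
  finally show ?thesis .
qed

lemma sum_sq_bound:
  fixes x :: "nat \<Rightarrow> nat"
  assumes N2: "2 \<le> N" and x1: "\<forall>k<N. 1 \<le> x k" and bad: "\<exists>k<N. x k \<noteq> 1"
  shows "1 / real N ^ 2 \<le> (\<Sum>k<N. real (x k) * (real (x k) - 1)) / (real (\<Sum>i<N. x i) * (real (\<Sum>i<N. x i) - 1))"
proof -
  define s where "s = real (\<Sum>i<N. x i)"
  define n where "n = real N"
  define Q where "Q = (\<Sum>k<N. (real (x k))\<^sup>2)"
  define T where "T = (\<Sum>k<N. real (x k) * (real (x k) - 1))"
  obtain k0 where k0: "k0 < N" "x k0 \<ge> 2" using bad x1 by force
  have sn: "s \<ge> n + 1"
  proof -
    have "(\<Sum>i<N. x i) = x k0 + (\<Sum>i\<in>{..<N} - {k0}. x i)"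
      using k0 by (simp add: sum.remove)
    moreover have "(\<Sum>i\<in>{..<N} - {k0}. x i) \<ge> (\<Sum>i\<in>{..<N} - {k0}. 1)"
      using x1 by (intro sum_mono) auto
    moreover have "(\<Sum>i\<in>{..<N} - {k0}. (1::nat)) = N - 1" using k0 by simp
    ultimately have "(\<Sum>i<N. x i) \<ge> N + 1" using k0 N2 by linarith
    then have "real (N + 1) \<le> real (\<Sum>i<N. x i)" by (simp only: of_nat_le_iff)
    then show ?thesis unfolding s_def n_def by (simp only: of_nat_add of_nat_1)
  qed
  have n2: "n \<ge> 2" unfolding n_def using N2 by simp
  have h1: "s\<^sup>2 \<le> Q * n"
    using sum_squared_le_sum_of_squares[of "\<lambda>k. real (x k)" "{..<N}"] unfolding s_def Q_def n_def by simp
  have h2: "T = Q - s" unfolding T_def Q_def s_def by (simp add: algebra_simps power2_eq_square sum_subtractf)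
  have "Q * n = n * T + n * s" unfolding h2 by (simp add: algebra_simps)
  then have h3: "n * T \<ge> s\<^sup>2 - n * s" using h1 by linarith
  have h4: "n * (n * T) \<ge> n * (s\<^sup>2 - n * s)" using h3 n2 by (intro mult_left_mono) auto
  have h5: "s * ((n - 1) * (s - n - 1)) \<ge> 0" using sn n2 by (intro mult_nonneg_nonneg) auto
  have h6: "s * (s - 1) \<le> n\<^sup>2 * T"
    using h4 h5 by (simp add: algebra_simps power2_eq_square)
  have pos: "s * (s - 1) > 0" using sn n2 by simp
  have "1 / n\<^sup>2 = (s * (s - 1)) / n\<^sup>2 / (s * (s - 1))"
  proof -
    have "s * (s - 1) \<noteq> 0" using pos by linarith
    then show ?thesis by simp
  qed
  also have "\<dots> \<le> T / (s * (s - 1))"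
    using h6 pos n2 by (intro divide_right_mono) (auto simp: divide_le_eq mult.commute)
  finally show ?thesis unfolding T_def s_def n_def by simp
qed

definition Gf :: "nat \<Rightarrow> nat \<Rightarrow> real" where
  "Gf a s = real a * (real a - 1) / (real s * (real s - 1))"

lemma Gf_bound:
  assumes "a \<le> s"
  shows "0 \<le> Gf a s" "Gf a s \<le> 1"
proof -
  have a0: "0 \<le> real a * (real a - 1)" by (cases a) auto
  have s0: "0 \<le> real s * (real s - 1)" by (cases s) auto
  show "0 \<le> Gf a s" unfolding Gf_def using a0 s0 by simp
  have "real a * (real a - 1) \<le> real s * (real s - 1)"
  proof (cases "a = 0")
    case True then show ?thesis using s0 by simp
  next
    case False
    then have "real a - 1 \<le> real s - 1" "0 \<le> real a - 1" using assms by auto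
    then show ?thesis using assms by (intro mult_mono) auto
  qed
  then show "Gf a s \<le> 1" unfolding Gf_def using a0 s0
    by (cases "real s * (real s - 1) = 0") (auto simp: divide_le_eq)
qed

lemma le_sum_single:
  fixes x :: "nat \<Rightarrow> nat"
  assumes "k < N"
  shows "x k \<le> (\<Sum>i<N. x i)"
  using assms by (intro member_le_sum) auto

lemma vfun_le:
  assumes "T \<in> Tset N x" "0 < N"
  shows "vfun T 0 \<le> N"
proof -
  have TU: "T \<subseteq> offspring N x" "card T = N" using assms unfolding Tset_def by auto
  have fT: "finite T" using TU(1) by (rule finite_subset) simp
  have "vfun T 0 = card (T \<inter> Ck N x 0)" using vfun_eq[OF TU(1) assms(2)] .
  also have "\<dots> \<le> card T" using fT by (intro card_mono) auto
  finally show ?thesis using TU by simp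
qed

lemma coal_bound:
  fixes q :: "nat pmf" and N :: nat
  assumes q: "set_pmf q \<subseteq> {1..}" and N2: "2 \<le> N"
  shows "measure_pmf.prob (Pi_pmf {..<N} 0 (\<lambda>_. q)) {x. \<exists>k<N. x k \<noteq> 1} / real N ^ 2 \<le> coal_prob q N"
proof -
  define M where "M = Pi_pmf {..<N} 0 (\<lambda>_. q)"
  define bad where "bad = {x::nat\<Rightarrow>nat. \<exists>k<N. x k \<noteq> 1}"
  define Sx where "Sx x = (\<Sum>i<N. x i)" for x :: "nat \<Rightarrow> nat"
  have x1: "\<forall>k<N. 1 \<le> x k" if "x \<in> set_pmf M" for x
    using support_Pi[of x N q] that q unfolding M_def by force
  have Gk_bound: "0 \<le> Gf (x k) (Sx x) \<and> Gf (x k) (Sx x) \<le> 1" if "k < N" for x k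
    using Gf_bound[OF le_sum_single[OF that, of x]] unfolding Sx_def by simp
  have intG: "integrable (measure_pmf M) (\<lambda>x. Gf (x k) (Sx x))" if "k < N" for k
    by (rule bounded_integrable_pmf[where B=1]) (use Gk_bound[OF that] in auto)
  have step1: "measure_pmf.expectation (cannings q N) (\<lambda>(x, v). real (v 0) * (real (v 0) - 1))
      = measure_pmf.expectation M (\<lambda>x. real N * (real N - 1) * Gf (x 0) (Sx x))"
  proof -
    have "measure_pmf.expectation (cannings q N) (\<lambda>(x, v). real (v 0) * (real (v 0) - 1))
       = measure_pmf.expectation M (\<lambda>x. measure_pmf.expectation (map_pmf (\<lambda>T. (x, vfun T)) (pmf_of_set (Tset N x)))
            (\<lambda>(x, v). real (v 0) * (real (v 0) - 1)))"
      unfolding cannings_alt M_def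
    proof (rule expectation_bind_pmf_bounded[where B="real N * real N"])
      fix x y assume x: "x \<in> set_pmf (Pi_pmf {..<N} 0 (\<lambda>_. q))"
        and y: "y \<in> set_pmf (map_pmf (\<lambda>T. (x, vfun T)) (pmf_of_set (Tset N x)))"
      have ne: "Tset N x \<noteq> {}" using Tset_nonempty x1 x unfolding M_def by blast
      from y obtain T where T: "T \<in> Tset N x" "y = (x, vfun T)" using ne by auto
      have v: "vfun T 0 \<le> N" using vfun_le[OF T(1)] N2 by simp
      define w where "w = vfun T 0"
      have "0 \<le> real w * (real w - 1)" by (cases w) auto
      moreover have "real w * (real w - 1) \<le> real N * real N"
      proof (cases "w = 0")
        case False
        then show ?thesis using v unfolding w_def[symmetric] by (intro mult_mono) auto
      qed simp
      ultimately show "\<bar>(case y of (x, v) \<Rightarrow> real (v 0) * (real (v 0) - 1))\<bar> \<le> real N * real N"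
        using T(2) w_def by simp
    qed
    also have "\<dots> = measure_pmf.expectation M (\<lambda>x. real N * (real N - 1) * Gf (x 0) (Sx x))"
    proof (rule integral_cong_AE)
      show "AE x in measure_pmf M. measure_pmf.expectation (map_pmf (\<lambda>T. (x, vfun T)) (pmf_of_set (Tset N x)))
            (\<lambda>(x, v). real (v 0) * (real (v 0) - 1)) = real N * (real N - 1) * Gf (x 0) (Sx x)"
        unfolding AE_measure_pmf_iff
      proof
        fix x assume x: "x \<in> set_pmf M"
        have "measure_pmf.expectation (map_pmf (\<lambda>T. (x, vfun T)) (pmf_of_set (Tset N x)))
            (\<lambda>(x, v). real (v 0) * (real (v 0) - 1))
          = measure_pmf.expectation (pmf_of_set (Tset N x)) (\<lambda>T. real (vfun T 0) * (real (vfun T 0) - 1))"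
          by simp
        also have "\<dots> = real (x 0) * (real (x 0) - 1) * real N * (real N - 1) / (real (\<Sum>i<N. x i) * (real (\<Sum>i<N. x i) - 1))"
          using pair_expectation[of 0 N x] N2 x1[OF x] by simp
        also have "\<dots> = real N * (real N - 1) * Gf (x 0) (Sx x)"
          unfolding Gf_def Sx_def by simp
        finally show "measure_pmf.expectation (map_pmf (\<lambda>T. (x, vfun T)) (pmf_of_set (Tset N x)))
            (\<lambda>(x, v). real (v 0) * (real (v 0) - 1)) = real N * (real N - 1) * Gf (x 0) (Sx x)" .
      qed
    qed auto
    finally show ?thesis .
  qed
  have step2: "measure_pmf.expectation M (\<lambda>x. Gf (x 0) (Sx x)) = measure_pmf.expectation M (\<lambda>x. Gf (x k) (Sx x))"
    if "k < N" for k
    unfolding M_def Sx_def by (rule Pi_swap_expectation[OF that])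
  have "coal_prob q N = real N * (real N - 1) * measure_pmf.expectation M (\<lambda>x. Gf (x 0) (Sx x)) / (real N - 1)"
    unfolding coal_prob_def step1 by simp
  also have "\<dots> = real N * measure_pmf.expectation M (\<lambda>x. Gf (x 0) (Sx x))"
    using N2 by simp
  also have "\<dots> = (\<Sum>k<N. measure_pmf.expectation M (\<lambda>x. Gf (x k) (Sx x)))"
  proof -
    have "(\<Sum>k<N. measure_pmf.expectation M (\<lambda>x. Gf (x k) (Sx x)))
        = (\<Sum>k<N. measure_pmf.expectation M (\<lambda>x. Gf (x 0) (Sx x)))"
      by (rule sum.cong[OF refl]) (use step2 in auto)
    then show ?thesis by simp
  qed
  also have "\<dots> = measure_pmf.expectation M (\<lambda>x. \<Sum>k<N. Gf (x k) (Sx x))"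
    by (rule Bochner_Integration.integral_sum[where I="{..<N}" and f="\<lambda>k x. Gf (x k) (Sx x)", symmetric]) (use intG in auto)
  finally have coal: "coal_prob q N = measure_pmf.expectation M (\<lambda>x. \<Sum>k<N. Gf (x k) (Sx x))" .
  have "measure_pmf.prob M bad / real N ^ 2 = measure_pmf.expectation M (\<lambda>x. indicator bad x / real N ^ 2)"
    by simp
  also have "\<dots> \<le> measure_pmf.expectation M (\<lambda>x. \<Sum>k<N. Gf (x k) (Sx x))"
  proof (rule integral_mono_AE)
    show "integrable (measure_pmf M) (\<lambda>x. indicator bad x / real N ^ 2)"
      by (rule bounded_integrable_pmf[where B=1]) (use N2 in \<open>auto simp: indicator_def\<close>)
    show "integrable (measure_pmf M) (\<lambda>x. \<Sum>k<N. Gf (x k) (Sx x))"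
      using intG by auto
    show "AE x in measure_pmf M. indicator bad x / real N ^ 2 \<le> (\<Sum>k<N. Gf (x k) (Sx x))"
      unfolding AE_measure_pmf_iff
    proof
      fix x assume x: "x \<in> set_pmf M"
      show "indicator bad x / real N ^ 2 \<le> (\<Sum>k<N. Gf (x k) (Sx x))"
      proof (cases "x \<in> bad")
        case True
        have "1 / real N ^ 2 \<le> (\<Sum>k<N. real (x k) * (real (x k) - 1)) / (real (Sx x) * (real (Sx x) - 1))"
          using sum_sq_bound[OF N2 x1[OF x]] True unfolding bad_def Sx_def by auto
        also have "\<dots> = (\<Sum>k<N. Gf (x k) (Sx x))" unfolding Gf_def by (simp add: sum_divide_distrib)
        finally show ?thesis using True by simp
      next
        case False
        have "0 \<le> (\<Sum>k<N. Gf (x k) (Sx x))" using Gk_bound by (intro sum_nonneg) auto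
        then show ?thesis using False by simp
      qed
    qed
  qed
  finally show ?thesis unfolding coal M_def bad_def .
qed

lemma poly_exp_lim:
  fixes b :: real
  assumes b: "b > 0"
  shows "(\<lambda>N::nat. real N ^ 5 * exp (- (b * real N))) \<longlonglongrightarrow> 0"
proof -
  have L: "filterlim (\<lambda>N::nat. b * real N) at_top sequentially"
    by (rule filterlim_tendsto_pos_mult_at_top[OF tendsto_const b filterlim_real_sequentially])
  have "(\<lambda>N::nat. (b * real N) ^ 5 / exp (b * real N)) \<longlonglongrightarrow> 0"
    by (rule filterlim_compose[OF tendsto_power_div_exp_0 L])
  then have "(\<lambda>N::nat. (1 / b ^ 5) * ((b * real N) ^ 5 / exp (b * real N))) \<longlonglongrightarrow> 0"
    by (rule tendsto_mult_right_zero)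
  moreover have "(1 / b ^ 5) * ((b * real N) ^ 5 / exp (b * real N)) = real N ^ 5 * exp (- (b * real N))" for N :: nat
    using b by (simp add: power_mult_distrib exp_minus field_simps)
  ultimately show ?thesis by simp
qed

theorem lemma2p4:
  fixes p :: "nat \<Rightarrow> nat pmf"
  assumes pos: "\<And>N. set_pmf (p N) \<subseteq> {1..}"
    and cN: "(\<lambda>N. coal_prob (p N) N) \<longlonglongrightarrow> 0"
  shows "\<forall>\<epsilon>>0. (\<lambda>N. real N ^ 2 / coal_prob (p N) N *
            measure_pmf.prob (cannings (p N) N)
              {(x, v). \<exists>k<N. \<bar>real (v k) / real N - real (x k) / real (\<Sum>i<N. x i)\<bar> > \<epsilon>})
          \<longlonglongrightarrow> 0"
proof (intro allI impI)
  fix \<epsilon> :: real assume e0: "\<epsilon> > 0"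
  define b where "b = (min \<epsilon> 1)\<^sup>2 / 4"
  have b0: "b > 0" unfolding b_def using e0 by simp
  define f where "f N = real N ^ 2 / coal_prob (p N) N *
            measure_pmf.prob (cannings (p N) N)
              {(x, v). \<exists>k<N. \<bar>real (v k) / real N - real (x k) / real (\<Sum>i<N. x i)\<bar> > \<epsilon>}" for N
  define g where "g N = 2 * (real N ^ 5 * exp (- (b * real N)))" for N :: nat
  have g0: "g \<longlonglongrightarrow> 0" unfolding g_def using tendsto_mult_right_zero[OF poly_exp_lim[OF b0], of 2] by simp
  have bnd: "0 \<le> f N \<and> f N \<le> g N" if N2: "N \<ge> 2" for N
  proof -
    define pb where "pb = measure_pmf.prob (Pi_pmf {..<N} 0 (\<lambda>_. p N)) {x. \<exists>k<N. x k \<noteq> 1}"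
    define P where "P = measure_pmf.prob (cannings (p N) N)
              {(x, v). \<exists>k<N. \<bar>real (v k) / real N - real (x k) / real (\<Sum>i<N. x i)\<bar> > \<epsilon>}"
    define c where "c = coal_prob (p N) N"
    define K where "K = 2 * real N * exp (- ((min \<epsilon> 1)\<^sup>2 * real N / 4))"
    have PK: "P \<le> K * pb" unfolding P_def K_def pb_def
      by (rule event_bound[OF pos _ e0]) (use N2 in simp)
    have cb: "pb / real N ^ 2 \<le> c" unfolding pb_def c_def by (rule coal_bound[OF pos N2])
    have pb0: "0 \<le> pb" unfolding pb_def by simp
    have P0: "0 \<le> P" unfolding P_def by simp
    have Npos: "real N > 0" using N2 by simp
    have c0: "0 \<le> c" using cb pb0 Npos by (meson divide_nonneg_pos le_less_trans not_le zero_less_power)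
    have fdef: "f N = real N ^ 2 / c * P" unfolding f_def c_def P_def ..
    have f0: "0 \<le> f N" unfolding fdef using c0 P0 by simp
    have gK: "g N = real N ^ 4 * K"
      unfolding g_def K_def b_def by (simp add: power_def algebra_simps)
    have "f N \<le> g N"
    proof (cases "pb = 0")
      case True
      then have "P = 0" using PK P0 by simp
      then show ?thesis unfolding fdef g_def by simp
    next
      case False
      then have pbpos: "pb > 0" using pb0 by simp
      have K0: "0 \<le> K" unfolding K_def by simp
      have "pb / real N ^ 2 > 0" using pbpos Npos by simp
      then have cpos: "c > 0" using cb by linarith
      have "real N ^ 2 / c \<le> real N ^ 2 / (pb / real N ^ 2)"
        using cb cpos pbpos Npos by (intro divide_left_mono) auto
      also have "\<dots> = real N ^ 4 / pb" using Npos by (simp add: field_simps power_def)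
      finally have h1: "real N ^ 2 / c \<le> real N ^ 4 / pb" .
      have "f N \<le> real N ^ 4 / pb * (K * pb)"
        unfolding fdef using h1 PK P0 cpos pbpos K0
        by (intro mult_mono) auto
      also have "\<dots> = real N ^ 4 * K" using pbpos by simp
      finally show ?thesis unfolding gK .
    qed
    then show ?thesis using f0 by simp
  qed
  have "f \<longlonglongrightarrow> 0"
  proof (rule tendsto_sandwich[OF _ _ tendsto_const g0])
    show "\<forall>\<^sub>F N in sequentially. 0 \<le> f N" using bnd by (auto simp: eventually_sequentially)
    show "\<forall>\<^sub>F N in sequentially. f N \<le> g N" using bnd by (auto simp: eventually_sequentially)
  qed
  then show "(\<lambda>N. real N ^ 2 / coal_prob (p N) N *
            measure_pmf.prob (cannings (p N) N)
              {(x, v). \<exists>k<N. \<bar>real (v k) / real N - real (x k) / real (\<Sum>i<N. x i)\<bar> > \<epsilon>})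
          \<longlonglongrightarrow> 0" unfolding f_def .
qed

end
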